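(* Let $\Gamma=(U\cup V,E)$ be a $3$-regular bipartite graph with $m=|U|=|V|$, and let $\hat\Gamma$ be as described in the context. For any $2$-factor $F$ of $\Gamma$ and any function $f:F\to\{0,1\}$, the set $\mu(F,f)$ contains exactly $2^{2m}$ perfect matchings.
   Context: Construction of $\hat\Gamma$: for each vertex $v$ of $\Gamma$ with neighbours $x,y,z$, there are four inner vertices $a_{v,S}$, one for each subset $S\subseteq\{x,y,z\}$ of even size, and six outer vertices $b_{v,u,0},b_{v,u,1}$ for $u\in\{x,y,z\}$. Within the gadget, $a_{v,S}$ is adjacent to $b_{v,u,1}$ if $u\in S$ and to $b_{v,u,0}$ if $u\notin S$. For each edge $e=\{u,v\}\in E$ and $i\in\{0,1\}$ there is an edge $e_i$ of $\hat\Gamma$ joining $b_{v,u,i}$ and $b_{u,v,i}$. There are no other edges. A perfect matching $\mu$ of $\hat\Gamma$ is uniform if for every $e\in E$ at most one of $e_0,e_1$ is in $\mu$; for such $\mu$, $F_\mu\subseteq E$ is the set of $e\in E$ such that exactly one of $e_0,e_1$ is in $\mu$, and $f_\mu:F_\mu\to\{0,1\}$ is given by $f_\mu(e)=i$ iff $e_i\in\mu$. A $2$-factor of $\Gamma$ is a set $F\subseteq E$ such that every vertex of $\Gamma$ is incident to exactly two edges of $F$. For a $2$-factor $F$ and $f:F\to\{0,1\}$, $\mu(F,f)$ denotes the set of (uniform) perfect matchings $\mu$ of $\hat\Gamma$ with $F_\mu=F$ and $f_\mu=f$. *)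

theory Defs
  imports Main
begin

definition nbrs :: "'a set set \<Rightarrow> 'a \<Rightarrow> 'a set" where
  "nbrs E x = {y. {x, y} \<in> E}"

definition cubic_bipartite :: "'a set \<Rightarrow> 'a set \<Rightarrow> 'a set set \<Rightarrow> bool" where
  "cubic_bipartite U V E \<longleftrightarrow> finite U \<and> finite V \<and> U \<inter> V = {} \<and>
     (\<forall>e\<in>E. \<exists>u\<in>U. \<exists>v\<in>V. e = {u, v}) \<and>
     (\<forall>x\<in>U \<union> V. card (nbrs E x) = 3)"

definition two_factor :: "'a set \<Rightarrow> 'a set set \<Rightarrow> 'a set set \<Rightarrow> bool" where
  "two_factor W E F \<longleftrightarrow> F \<subseteq> E \<and> (\<forall>x\<in>W. card {e\<in>F. x \<in> e} = 2)"

text \<open>Vertices of hat Gamma: inner vertices a_{v,S} and outer vertices b_{v,u,i}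
  (with i \<in> {0,1} encoded as bool, True = 1).\<close>
datatype 'a hvert = Inner 'a "'a set" | Outer 'a 'a bool

definition hat_verts :: "'a set \<Rightarrow> 'a set set \<Rightarrow> 'a hvert set" where
  "hat_verts W E =
     {Inner v S | v S. v \<in> W \<and> S \<subseteq> nbrs E v \<and> even (card S)} \<union>
     {Outer v u i | v u i. v \<in> W \<and> u \<in> nbrs E v}"

definition cross_edge :: "'a \<Rightarrow> 'a \<Rightarrow> bool \<Rightarrow> 'a hvert set" where
  "cross_edge u v i = {Outer v u i, Outer u v i}"

definition hat_edges :: "'a set \<Rightarrow> 'a set set \<Rightarrow> 'a hvert set set" where
  "hat_edges W E =
     {{Inner v S, Outer v u (u \<in> S)} | v S u.
        v \<in> W \<and> S \<subseteq> nbrs E v \<and> even (card S) \<and> u \<in> nbrs E v} \<union>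
     {cross_edge u v i | u v i. {u, v} \<in> E}"

definition perfect_matching :: "'a hvert set \<Rightarrow> 'a hvert set set \<Rightarrow> 'a hvert set set \<Rightarrow> bool" where
  "perfect_matching VV EE M \<longleftrightarrow> M \<subseteq> EE \<and> (\<forall>x\<in>VV. \<exists>!e. e \<in> M \<and> x \<in> e)"

definition uniform :: "'a set set \<Rightarrow> 'a hvert set set \<Rightarrow> bool" where
  "uniform E M \<longleftrightarrow> (\<forall>u v. {u, v} \<in> E \<longrightarrow>
      \<not> (cross_edge u v False \<in> M \<and> cross_edge u v True \<in> M))"

definition F_of :: "'a set set \<Rightarrow> 'a hvert set set \<Rightarrow> 'a set set" where
  "F_of E M = {e \<in> E. \<exists>u v. e = {u, v} \<and>
      ((cross_edge u v False \<in> M) \<noteq> (cross_edge u v True \<in> M))}"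

definition mu_set :: "'a set \<Rightarrow> 'a set set \<Rightarrow> 'a set set \<Rightarrow> ('a set \<Rightarrow> bool) \<Rightarrow> 'a hvert set set set" where
  "mu_set W E F f = {M. perfect_matching (hat_verts W E) (hat_edges W E) M \<and> uniform E M \<and>
      F_of E M = F \<and> (\<forall>u v. {u, v} \<in> F \<longrightarrow> cross_edge u v (f {u, v}) \<in> M)}"

end

theory Submission
  imports Defs "HOL-Library.FuncSet"
begin


definition Sof :: "'a \<Rightarrow> 'a \<Rightarrow> 'a \<Rightarrow> bool \<Rightarrow> bool \<Rightarrow> 'a set" where
  "Sof x y z s t = (if s then {x} else {}) \<union> (if t then {y} else {}) \<union> (if s \<noteq> t then {z} else {})"

definition IEloc :: "'a \<Rightarrow> 'a set \<Rightarrow> 'a hvert set set" where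
  "IEloc v N = {{Inner v S, Outer v u (u \<in> S)} | S u. S \<subseteq> N \<and> even (card S) \<and> u \<in> N}"

context
  fixes x y z v :: 'a
  assumes d: "x \<noteq> y" "x \<noteq> z" "y \<noteq> z"
begin

lemma Sof_mem: "(x \<in> Sof x y z s t) = s" "(y \<in> Sof x y z s t) = t" "(z \<in> Sof x y z s t) = (s \<noteq> t)"
  using d by (auto simp: Sof_def)

lemma Sof_eq: "(Sof x y z s t = Sof x y z s' t') = (s = s' \<and> t = t')"
proof
  assume h: "Sof x y z s t = Sof x y z s' t'"
  have "s = s'" using Sof_mem(1)[of s t] Sof_mem(1)[of s' t'] h by simp
  moreover have "t = t'" using Sof_mem(2)[of s t] Sof_mem(2)[of s' t'] h by simp
  ultimately show "s = s' \<and> t = t'" ..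
qed simp

lemma Sof_sub: "Sof x y z s t \<subseteq> {x,y,z}"
  by (auto simp: Sof_def)

lemma Sof_even: "even (card (Sof x y z s t))"
  using d by (cases s; cases t) (auto simp: Sof_def)

lemma Sof_char: assumes "S \<subseteq> {x,y,z}" "even (card S)" shows "\<exists>s t. S = Sof x y z s t"
proof -
  have "S \<in> Pow {x,y,z}" using assms by auto
  hence "S = {} \<or> S = {x} \<or> S = {y} \<or> S = {z} \<or> S = {x,y} \<or> S = {x,z} \<or> S = {y,z} \<or> S = {x,y,z}"
    by (auto simp: Pow_insert)
  thus ?thesis using assms(2) d
    apply (elim disjE)
    apply (rule exI[of _ False], rule exI[of _ False], simp add: Sof_def)
    apply simp
    apply simp
    apply simp
    apply (rule exI[of _ True], rule exI[of _ True], force simp add: Sof_def)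
    apply (rule exI[of _ True], rule exI[of _ False], force simp add: Sof_def)
    apply (rule exI[of _ False], rule exI[of _ True], force simp add: Sof_def)
    apply simp
    done
qed

definition edge :: "bool \<Rightarrow> bool \<Rightarrow> 'a \<Rightarrow> 'a hvert set" where
  "edge s t u = {Inner v (Sof x y z s t), Outer v u (u \<in> Sof x y z s t)}"

lemma IEloc_eq: "IEloc v {x,y,z} = {edge s t u | s t u. u \<in> {x,y,z}}"
proof (rule set_eqI, rule iffI)
  fix e assume "e \<in> IEloc v {x,y,z}"
  then obtain S u where e: "e = {Inner v S, Outer v u (u \<in> S)}" "S \<subseteq> {x,y,z}" "even (card S)" "u \<in> {x,y,z}"
    unfolding IEloc_def by blast
  obtain s t where "S = Sof x y z s t" using Sof_char[OF e(2,3)] by blast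
  hence "e = edge s t u" using e(1) by (simp add: edge_def)
  thus "e \<in> {edge s t u | s t u. u \<in> {x,y,z}}" using e(4) by blast
next
  fix e assume "e \<in> {edge s t u | s t u. u \<in> {x,y,z}}"
  then obtain s t u where e: "e = edge s t u" "u \<in> {x,y,z}" by blast
  have "e = {Inner v (Sof x y z s t), Outer v u (u \<in> Sof x y z s t)}" using e(1) by (simp add: edge_def)
  moreover have "Sof x y z s t \<subseteq> {x,y,z}" "even (card (Sof x y z s t))" using Sof_sub Sof_even by auto
  ultimately show "e \<in> IEloc v {x,y,z}" unfolding IEloc_def using e(2) by blast
qed

lemma in_edge: "(Inner v' S \<in> edge s t u) = (v' = v \<and> S = Sof x y z s t)"
   "(Outer v' w i \<in> edge s t u) = (v' = v \<and> w = u \<and> i = (u \<in> Sof x y z s t))"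
  by (auto simp: edge_def)

lemma edge_eq: "(edge s t u = edge s' t' u') = (s = s' \<and> t = t' \<and> u = u')"
  by (auto simp: edge_def doubleton_eq_iff Sof_eq)


definition good :: "('a \<Rightarrow> bool \<Rightarrow> bool) \<Rightarrow> 'a hvert set set \<Rightarrow> bool" where
  "good B L \<longleftrightarrow> L \<subseteq> IEloc v {x,y,z} \<and>
     (\<forall>S. S \<subseteq> {x,y,z} \<and> even (card S) \<longrightarrow> (\<exists>!e. e \<in> L \<and> Inner v S \<in> e)) \<and>
     (\<forall>u\<in>{x,y,z}. \<forall>i. if B u i then \<not> (\<exists>e\<in>L. Outer v u i \<in> e) else (\<exists>!e. e \<in> L \<and> Outer v u i \<in> e))"

lemma good_cases:
  assumes B: "\<And>i. B x i = (i = p)" "\<And>i. B y i = (i = q)" "\<And>i. \<not> B z i"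
    and g: "good B L"
  shows "L = {edge (\<not>p) (\<not>q) x, edge (\<not>p) q z, edge p (\<not>q) y, edge p q z} \<or>
         L = {edge (\<not>p) (\<not>q) y, edge p (\<not>q) z, edge (\<not>p) q x, edge p q z}"
proof -
  define A where "A s t u = (edge s t u \<in> L)" for s t u
  have sub: "L \<subseteq> {edge s t u | s t u. u \<in> {x,y,z}}" using g IEloc_eq by (simp add: good_def)
  have inner: "\<exists>!e. e \<in> L \<and> Inner v (Sof x y z s t) \<in> e" for s t
    using g Sof_sub Sof_even by (simp add: good_def)
  have iex: "A s t x \<or> A s t y \<or> A s t z" for s t
  proof -
    obtain e where "e \<in> L" "Inner v (Sof x y z s t) \<in> e" using inner[of s t] by blast
    then show ?thesis using sub by (auto simp: A_def in_edge Sof_eq)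
  qed
  have iun: "A s t u \<Longrightarrow> A s t u' \<Longrightarrow> u = u'" for s t u u'
    using inner[of s t] unfolding A_def by (metis edge_eq in_edge(1))
  have outer: "u \<in> {x,y,z} \<Longrightarrow> (if B u i then \<not> (\<exists>e\<in>L. Outer v u i \<in> e) else (\<exists>!e. e \<in> L \<and> Outer v u i \<in> e))" for u i
    using g unfolding good_def by blast
  have oblock: "u \<in> {x,y,z} \<Longrightarrow> B u i \<Longrightarrow> A s t u \<Longrightarrow> i \<noteq> (u \<in> Sof x y z s t)" for u i s t
    using outer[of u i] unfolding A_def by (auto simp: in_edge)
  have oex: "u \<in> {x,y,z} \<Longrightarrow> \<not> B u i \<Longrightarrow> \<exists>s t. A s t u \<and> i = (u \<in> Sof x y z s t)" for u i
  proof -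
    assume "u \<in> {x,y,z}" "\<not> B u i"
    then obtain e where e: "e \<in> L" "Outer v u i \<in> e" using outer[of u i] by auto
    then obtain s t u' where eq: "e = edge s t u'" using sub by blast
    then have "u' = u" "i = (u \<in> Sof x y z s t)" using e(2) by (auto simp: in_edge)
    then show ?thesis using e eq by (auto simp: A_def)
  qed
  have oun: "u \<in> {x,y,z} \<Longrightarrow> \<not> B u i \<Longrightarrow> A s t u \<Longrightarrow> A s' t' u \<Longrightarrow> i = (u \<in> Sof x y z s t)
     \<Longrightarrow> i = (u \<in> Sof x y z s' t') \<Longrightarrow> s = s' \<and> t = t'" for u i s t s' t'
  proof -
    assume a: "u \<in> {x,y,z}" "\<not> B u i" "A s t u" "A s' t' u" "i = (u \<in> Sof x y z s t)" "i = (u \<in> Sof x y z s' t')"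
    have "\<exists>!e. e \<in> L \<and> Outer v u i \<in> e" using outer[of u i] a by simp
    moreover have "edge s t u \<in> L \<and> Outer v u i \<in> edge s t u" using a by (simp add: A_def in_edge)
    moreover have "edge s' t' u \<in> L \<and> Outer v u i \<in> edge s' t' u" using a by (simp add: A_def in_edge)
    ultimately have "edge s t u = edge s' t' u" by blast
    thus ?thesis by (simp add: edge_eq)
  qed
  note facts = iex iun oblock oex oun
  have ground: "(\<forall>s t u. A s t u = ((u = x \<and> s = (\<not>p) \<and> t = (\<not>q)) \<or> (u = z \<and> s = (\<not>p) \<and> t = q) \<or> (u = y \<and> s = p \<and> t = (\<not>q)) \<or> (u = z \<and> s = p \<and> t = q))) \<or>
     (\<forall>s t u. A s t u = ((u = y \<and> s = (\<not>p) \<and> t = (\<not>q)) \<or> (u = z \<and> s = p \<and> t = (\<not>q)) \<or> (u = x \<and> s = (\<not>p) \<and> t = q) \<or> (u = z \<and> s = p \<and> t = q)))"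
  proof -
    have fo: "\<forall>s t u. u \<notin> {x,y,z} \<longrightarrow> \<not> A s t u" using sub by (auto simp: A_def edge_eq)
    have fx1: "\<forall>t. \<not> A p t x" using oblock[of x p] B Sof_mem by auto
    have fy1: "\<forall>s. \<not> A s q y" using oblock[of y q] B Sof_mem by auto
    have fx2: "A (\<not>p) True x \<noteq> A (\<not>p) False x"
    proof -
      obtain s t where h: "A s t x" "(\<not>p) = s" using oex[of x "\<not>p"] B Sof_mem by auto
      have h2: "A (\<not>p) t x" using h by simp
      have "\<not> (A (\<not>p) True x \<and> A (\<not>p) False x)"
        using oun[of x "\<not>p" "\<not>p" True "\<not>p" False] B Sof_mem by auto
      thus ?thesis using h2 by (cases t) auto
    qed
    have fy2: "A True (\<not>q) y \<noteq> A False (\<not>q) y"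
    proof -
      obtain s t where h: "A s t y" "(\<not>q) = t" using oex[of y "\<not>q"] B Sof_mem by auto
      have h2: "A s (\<not>q) y" using h by simp
      have "\<not> (A True (\<not>q) y \<and> A False (\<not>q) y)"
        using oun[of y "\<not>q" True "\<not>q" False] B Sof_mem by auto
      thus ?thesis using h2 by (cases s) auto
    qed
    have fz: "A s t z \<noteq> A (\<not>s) (\<not>t) z" for s t
    proof -
      obtain s' t' where h: "A s' t' z" "(s \<noteq> t) = (s' \<noteq> t')" using oex[of z "s \<noteq> t"] B Sof_mem by auto
      have nb: "\<not> (A s t z \<and> A (\<not>s) (\<not>t) z)"
        using oun[of z "s \<noteq> t" s t "\<not>s" "\<not>t"] B Sof_mem by auto
      have "(s' = s \<and> t' = t) \<or> (s' = (\<not>s) \<and> t' = (\<not>t))" using h(2)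
        by (cases s; cases t; cases s'; cases t') auto
      hence "A s t z \<or> A (\<not>s) (\<not>t) z" using h(1) by auto
      thus ?thesis using nb by auto
    qed
    have fx2': "A (\<not>p) t x \<noteq> A (\<not>p) (\<not>t) x" for t using fx2 by (cases t) auto
    have fy2': "A s (\<not>q) y \<noteq> A (\<not>s) (\<not>q) y" for s using fy2 by (cases s) auto
    have fi': "(A s t x \<or> A s t y \<or> A s t z) \<and> \<not>(A s t x \<and> A s t y) \<and> \<not>(A s t x \<and> A s t z) \<and> \<not>(A s t y \<and> A s t z)" for s t
      using iex[of s t] iun[of s t x y] iun[of s t x z] iun[of s t y z] d by blast
    have c1: "A p q z" using fi'[of p q] fx1 fy1 by blast
    have c2: "\<not> A (\<not>p) (\<not>q) z" using fz[of p q] c1 by simp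
    have x1: "\<not> A p t x" for t using fx1 by blast
    have y1: "\<not> A s q y" for s using fy1 by blast
    show ?thesis
    proof (cases "A (\<not>p) (\<not>q) x")
      case True
      have c3: "\<not> A (\<not>p) (\<not>q) y" using fi'[of "\<not>p" "\<not>q"] True by blast
      have c4: "\<not> A (\<not>p) q x" using fx2'[of "\<not>q"] True by simp
      have c5: "A (\<not>p) q z" using fi'[of "\<not>p" q] y1 c4 by blast
      have c6: "\<not> A p (\<not>q) z" using fz[of "\<not>p" q] c5 by simp
      have c7: "A p (\<not>q) y" using fi'[of p "\<not>q"] x1 c6 by blast
      have c8: "\<not> A p q x" "\<not> A p q y" "\<not> A (\<not>p) q y" "\<not> A p (\<not>q) x" using x1 y1 by auto
      have key: "A s t u = ((u = x \<and> s = (\<not>p) \<and> t = (\<not>q)) \<or> (u = z \<and> s = (\<not>p) \<and> t = q) \<or> (u = y \<and> s = p \<and> t = (\<not>q)) \<or> (u = z \<and> s = p \<and> t = q))" for s t u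
      proof -
        have sp: "s = p \<or> s = (\<not>p)" and tq: "t = q \<or> t = (\<not>q)" by auto
        consider "u = x" | "u = y" | "u = z" | "u \<notin> {x,y,z}" by blast
        thus ?thesis
        proof cases
          case 1 thus ?thesis using sp tq True c1 c2 c3 c4 c5 c6 c7 c8 d by (elim disjE) simp_all
        next
          case 2 thus ?thesis using sp tq True c1 c2 c3 c4 c5 c6 c7 c8 d by (elim disjE) simp_all
        next
          case 3 thus ?thesis using sp tq True c1 c2 c3 c4 c5 c6 c7 c8 d by (elim disjE) simp_all
        next
          case 4 thus ?thesis using fo by auto
        qed
      qed
      show ?thesis using key by blast
    next
      case False
      have c3: "A (\<not>p) (\<not>q) y" using fi'[of "\<not>p" "\<not>q"] False c2 by blast
      have c4: "\<not> A p (\<not>q) y" using fy2'[of "\<not>p"] c3 by simp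
      have c5: "A p (\<not>q) z" using fi'[of p "\<not>q"] x1 c4 by blast
      have c6: "\<not> A (\<not>p) q z" using fz[of p "\<not>q"] c5 by simp
      have c7: "A (\<not>p) q x" using fi'[of "\<not>p" q] y1 c6 by blast
      have c8: "\<not> A p q x" "\<not> A p q y" "\<not> A (\<not>p) q y" "\<not> A p (\<not>q) x" using x1 y1 by auto
      have key: "A s t u = ((u = y \<and> s = (\<not>p) \<and> t = (\<not>q)) \<or> (u = z \<and> s = p \<and> t = (\<not>q)) \<or> (u = x \<and> s = (\<not>p) \<and> t = q) \<or> (u = z \<and> s = p \<and> t = q))" for s t u
      proof -
        have sp: "s = p \<or> s = (\<not>p)" and tq: "t = q \<or> t = (\<not>q)" by auto
        consider "u = x" | "u = y" | "u = z" | "u \<notin> {x,y,z}" by blast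
        thus ?thesis
        proof cases
          case 1 thus ?thesis using sp tq False c1 c2 c3 c4 c5 c6 c7 c8 d by (elim disjE) simp_all
        next
          case 2 thus ?thesis using sp tq False c1 c2 c3 c4 c5 c6 c7 c8 d by (elim disjE) simp_all
        next
          case 3 thus ?thesis using sp tq False c1 c2 c3 c4 c5 c6 c7 c8 d by (elim disjE) simp_all
        next
          case 4 thus ?thesis using fo by auto
        qed
      qed
      show ?thesis using key by blast
    qed
  qed
  have Lrep: "L = {edge s t u | s t u. A s t u}" using sub unfolding A_def by blast
  from ground show ?thesis
  proof
    assume h: "\<forall>s t u. A s t u = ((u = x \<and> s = (\<not>p) \<and> t = (\<not>q)) \<or> (u = z \<and> s = (\<not>p) \<and> t = q) \<or> (u = y \<and> s = p \<and> t = (\<not>q)) \<or> (u = z \<and> s = p \<and> t = q))"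
    have "L = {edge (\<not>p) (\<not>q) x, edge (\<not>p) q z, edge p (\<not>q) y, edge p q z}"
      unfolding Lrep using h by auto
    thus ?thesis ..
  next
    assume h: "\<forall>s t u. A s t u = ((u = y \<and> s = (\<not>p) \<and> t = (\<not>q)) \<or> (u = z \<and> s = p \<and> t = (\<not>q)) \<or> (u = x \<and> s = (\<not>p) \<and> t = q) \<or> (u = z \<and> s = p \<and> t = q))"
    have "L = {edge (\<not>p) (\<not>q) y, edge p (\<not>q) z, edge (\<not>p) q x, edge p q z}"
      unfolding Lrep using h by auto
    thus ?thesis ..
  qed
qed


lemma ex1_four: "distinct [a,b,c,e] \<Longrightarrow> (\<exists>!w. w \<in> {a,b,c,e} \<and> P w) \<longleftrightarrow>
   (P a \<and> \<not> P b \<and> \<not> P c \<and> \<not> P e) \<or> (\<not> P a \<and> P b \<and> \<not> P c \<and> \<not> P e) \<or>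
   (\<not> P a \<and> \<not> P b \<and> P c \<and> \<not> P e) \<or> (\<not> P a \<and> \<not> P b \<and> \<not> P c \<and> P e)"
  by auto

lemma good_four:
  assumes B: "\<And>i. B x i = (i = p)" "\<And>i. B y i = (i = q)" "\<And>i. \<not> B z i"
    and L: "L = {edge s1 t1 u1, edge s2 t2 u2, edge s3 t3 u3, edge s4 t4 u4}"
    and u: "u1 \<in> {x,y,z}" "u2 \<in> {x,y,z}" "u3 \<in> {x,y,z}" "u4 \<in> {x,y,z}"
    and dist: "distinct [edge s1 t1 u1, edge s2 t2 u2, edge s3 t3 u3, edge s4 t4 u4]"
    and inn: "\<And>s t. (s = s1 \<and> t = t1) \<and> \<not>(s = s2 \<and> t = t2) \<and> \<not>(s = s3 \<and> t = t3) \<and> \<not>(s = s4 \<and> t = t4) \<or>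
                    \<not>(s = s1 \<and> t = t1) \<and> (s = s2 \<and> t = t2) \<and> \<not>(s = s3 \<and> t = t3) \<and> \<not>(s = s4 \<and> t = t4) \<or>
                    \<not>(s = s1 \<and> t = t1) \<and> \<not>(s = s2 \<and> t = t2) \<and> (s = s3 \<and> t = t3) \<and> \<not>(s = s4 \<and> t = t4) \<or>
                    \<not>(s = s1 \<and> t = t1) \<and> \<not>(s = s2 \<and> t = t2) \<and> \<not>(s = s3 \<and> t = t3) \<and> (s = s4 \<and> t = t4)"
    and out: "\<And>w i. w \<in> {x,y,z} \<Longrightarrow> (let Q = (\<lambda>s t u. w = u \<and> i = (u \<in> Sof x y z s t)) in
        if B w i then \<not> (Q s1 t1 u1 \<or> Q s2 t2 u2 \<or> Q s3 t3 u3 \<or> Q s4 t4 u4)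
        else (Q s1 t1 u1 \<and> \<not> Q s2 t2 u2 \<and> \<not> Q s3 t3 u3 \<and> \<not> Q s4 t4 u4) \<or>
             (\<not> Q s1 t1 u1 \<and> Q s2 t2 u2 \<and> \<not> Q s3 t3 u3 \<and> \<not> Q s4 t4 u4) \<or>
             (\<not> Q s1 t1 u1 \<and> \<not> Q s2 t2 u2 \<and> Q s3 t3 u3 \<and> \<not> Q s4 t4 u4) \<or>
             (\<not> Q s1 t1 u1 \<and> \<not> Q s2 t2 u2 \<and> \<not> Q s3 t3 u3 \<and> Q s4 t4 u4))"
  shows "good B L"
  unfolding good_def
proof (intro conjI)
  show "L \<subseteq> IEloc v {x,y,z}" unfolding IEloc_eq L using u by blast
  show "\<forall>S. S \<subseteq> {x, y, z} \<and> even (card S) \<longrightarrow> (\<exists>!e. e \<in> L \<and> Inner v S \<in> e)"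
  proof (intro allI impI)
    fix S assume "S \<subseteq> {x, y, z} \<and> even (card S)"
    then obtain s t where S: "S = Sof x y z s t" using Sof_char by blast
    show "\<exists>!e. e \<in> L \<and> Inner v S \<in> e"
      unfolding L S ex1_four[OF dist] using inn[of s t] by (simp add: in_edge Sof_eq)
  qed
  show "\<forall>u\<in>{x, y, z}. \<forall>i. if B u i then \<not> (\<exists>e\<in>L. Outer v u i \<in> e) else \<exists>!e. e \<in> L \<and> Outer v u i \<in> e"
  proof (intro ballI allI)
    fix w i assume w: "w \<in> {x,y,z}"
    show "if B w i then \<not> (\<exists>e\<in>L. Outer v w i \<in> e) else \<exists>!e. e \<in> L \<and> Outer v w i \<in> e"
      unfolding L ex1_four[OF dist] using out[OF w, of i] by (cases "B w i") (auto simp: in_edge Let_def)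
  qed
qed

lemma card_good:
  assumes B: "\<And>i. B x i = (i = p)" "\<And>i. B y i = (i = q)" "\<And>i. \<not> B z i"
  shows "card {L. good B L} = 2"
proof -
  let ?L1 = "{edge (\<not>p) (\<not>q) x, edge (\<not>p) q z, edge p (\<not>q) y, edge p q z}"
  let ?L2 = "{edge (\<not>p) (\<not>q) y, edge p (\<not>q) z, edge (\<not>p) q x, edge p q z}"
  have g1: "good B ?L1"
    apply (rule good_four[OF B refl])
    subgoal by simp
    subgoal by simp
    subgoal by simp
    subgoal by simp
    subgoal using d by (simp add: edge_eq)
    subgoal for s t by (cases p; cases q; cases s; cases t) simp_all
    subgoal for w i using d B by (elim insertE emptyE; hypsubst; cases p; cases q; cases i; simp add: Sof_mem Let_def)
    done
  have g2: "good B ?L2"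
    apply (rule good_four[OF B refl])
    subgoal by simp
    subgoal by simp
    subgoal by simp
    subgoal by simp
    subgoal using d by (simp add: edge_eq)
    subgoal for s t by (cases p; cases q; cases s; cases t) simp_all
    subgoal for w i using d B by (elim insertE emptyE; hypsubst; cases p; cases q; cases i; simp add: Sof_mem Let_def)
    done
  have "{L. good B L} = {?L1, ?L2}"
  proof (rule set_eqI, rule iffI)
    fix L assume "L \<in> {L. good B L}"
    hence "good B L" by simp
    from good_cases[OF B this] show "L \<in> {?L1, ?L2}" by (elim disjE) simp_all
  next
    fix L assume "L \<in> {?L1, ?L2}"
    hence "L = ?L1 \<or> L = ?L2" by (simp only: insert_iff empty_iff simp_thms)
    thus "L \<in> {L. good B L}" by (elim disjE) (simp_all only: mem_Collect_eq g1 g2)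
  qed
  moreover have neq: "?L1 \<noteq> ?L2"
  proof
    assume eq: "?L1 = ?L2"
    have "edge (\<not>p) (\<not>q) x \<in> ?L1" by simp
    hence "edge (\<not>p) (\<not>q) x \<in> ?L2" by (simp only: eq)
    thus False using d by (simp add: edge_eq)
  qed
  ultimately show ?thesis using neq by (simp only: card_insert_disjoint finite.intros insert_iff empty_iff simp_thms card.empty)
qed

end


fun owner :: "'a hvert \<Rightarrow> 'a" where
  "owner (Inner v S) = v"
| "owner (Outer v u i) = v"

definition IE :: "'a set set \<Rightarrow> 'a \<Rightarrow> 'a hvert set set" where
  "IE E v = IEloc v (nbrs E v)"

definition CR :: "'a set set \<Rightarrow> 'a hvert set set" where
  "CR E = {cross_edge u v i | u v i. {u, v} \<in> E}"

definition Cset :: "'a set set \<Rightarrow> ('a set \<Rightarrow> bool) \<Rightarrow> 'a hvert set set" where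
  "Cset F f = {cross_edge u v (f {u, v}) | u v. {u, v} \<in> F}"

definition Loc :: "'a set \<Rightarrow> 'a set set \<Rightarrow> 'a set set \<Rightarrow> ('a set \<Rightarrow> bool) \<Rightarrow> 'a \<Rightarrow> 'a hvert set set set" where
  "Loc W E F f v = {L. L \<subseteq> IE E v \<and>
     (\<forall>w\<in>hat_verts W E. owner w = v \<longrightarrow> (\<exists>!e. e \<in> Cset F f \<union> L \<and> w \<in> e))}"

lemma cross_eq: "(cross_edge u v i = cross_edge u' v' i') = (i = i' \<and> {u, v} = {u', v'})"
  by (auto simp: cross_edge_def doubleton_eq_iff)

lemma C_mem: "(cross_edge u v i \<in> Cset F f) = ({u, v} \<in> F \<and> i = f {u, v})"
  by (auto simp: Cset_def cross_eq)

lemma C_outer: "(e \<in> Cset F f \<and> Outer v u i \<in> e) = ({u, v} \<in> F \<and> i = f {u, v} \<and> e = cross_edge u v i)"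
  by (auto simp: Cset_def cross_edge_def doubleton_eq_iff insert_commute)

lemma C_inner: "e \<in> Cset F f \<Longrightarrow> Inner v S \<notin> e"
  by (auto simp: Cset_def cross_edge_def)

lemma IE_owner: "e \<in> IE E v \<Longrightarrow> w \<in> e \<Longrightarrow> owner w = v"
  by (auto simp: IE_def IEloc_def)

lemma IE_CR: "e \<in> IE E v \<Longrightarrow> e \<notin> CR E"
  by (auto simp: IE_def IEloc_def CR_def cross_edge_def)

lemma IE_disj: "e \<in> IE E v \<Longrightarrow> e \<in> IE E v' \<Longrightarrow> v = v'"
  by (auto simp: IE_def IEloc_def)

lemma hat_edges_eq: "hat_edges W E = (\<Union>v\<in>W. IE E v) \<union> CR E"
  unfolding hat_edges_def IE_def IEloc_def CR_def by blast

lemma pick3: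
  assumes "x \<noteq> y" "x \<noteq> z" "y \<noteq> z" "card {u\<in>{x,y,z}. P u} = 2"
  shows "\<exists>a b c. {a,b,c} = {x,y,z} \<and> a \<noteq> b \<and> a \<noteq> c \<and> b \<noteq> c \<and> P a \<and> P b \<and> \<not> P c"
proof -
  have e: "{u\<in>{x,y,z}. P u} = (if P x then {x} else {}) \<union> (if P y then {y} else {}) \<union> (if P z then {z} else {})"
    by auto
  show ?thesis using assms unfolding e
    by (cases "P x"; cases "P y"; cases "P z") (auto simp: insert_commute)
qed

context
  fixes U V :: "'a set" and E F :: "'a set set" and f :: "'a set \<Rightarrow> bool"
  assumes cb: "cubic_bipartite U V E" and tf: "two_factor (U \<union> V) E F"
begin

lemma nb_sym: "u \<in> nbrs E v \<longleftrightarrow> v \<in> nbrs E u"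
  by (simp add: nbrs_def insert_commute)

lemma E_form: "e \<in> E \<Longrightarrow> \<exists>a\<in>U. \<exists>b\<in>V. e = {a, b}"
  using cb by (simp add: cubic_bipartite_def)

lemma nb_W: "u \<in> nbrs E v \<Longrightarrow> u \<in> U \<union> V \<and> v \<in> U \<union> V"
  using E_form[of "{v,u}"] by (auto simp: nbrs_def doubleton_eq_iff)

lemma nb_ne: "u \<in> nbrs E v \<Longrightarrow> u \<noteq> v"
  using E_form[of "{v,u}"] cb by (auto simp: nbrs_def doubleton_eq_iff cubic_bipartite_def)

lemma finW: "finite (U \<union> V)"
  using cb by (simp add: cubic_bipartite_def)

lemma F_sub: "F \<subseteq> E" using tf by (simp add: two_factor_def)

lemma local_structure:
  assumes v: "v \<in> U \<union> V"
  shows "\<exists>x y z. nbrs E v = {x,y,z} \<and> x \<noteq> y \<and> x \<noteq> z \<and> y \<noteq> z \<and> {v,x} \<in> F \<and> {v,y} \<in> F \<and> {v,z} \<notin> F"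
proof -
  have "card (nbrs E v) = 3" using cb v by (simp add: cubic_bipartite_def)
  then obtain x y z where N: "nbrs E v = {x,y,z}" "x \<noteq> y" "y \<noteq> z" "x \<noteq> z"
    by (auto simp: card_3_iff)
  have "card {e\<in>F. v \<in> e} = 2" using tf v by (simp add: two_factor_def)
  moreover have "{e\<in>F. v \<in> e} = (\<lambda>u. {v,u}) ` {u\<in>{x,y,z}. {v,u} \<in> F}"
  proof
    show "{e\<in>F. v \<in> e} \<subseteq> (\<lambda>u. {v,u}) ` {u\<in>{x,y,z}. {v,u} \<in> F}"
    proof
      fix e assume "e \<in> {e\<in>F. v \<in> e}"
      hence e: "e \<in> F" "v \<in> e" by auto
      then obtain a b where ab: "e = {a,b}" using F_sub E_form by blast
      then obtain u where "e = {v,u}" using e(2) by (auto simp: insert_commute)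
      moreover have "u \<in> nbrs E v" using e(1) F_sub calculation by (auto simp: nbrs_def)
      ultimately show "e \<in> (\<lambda>u. {v,u}) ` {u\<in>{x,y,z}. {v,u} \<in> F}" using e(1) N(1) by auto
    qed
  qed auto
  moreover have "inj_on (\<lambda>u. {v,u}) {u\<in>{x,y,z}. {v,u} \<in> F}"
    by (rule inj_onI) (auto simp: doubleton_eq_iff)
  ultimately have "card {u\<in>{x,y,z}. {v,u} \<in> F} = 2" by (simp add: card_image)
  then obtain a b c where "{a,b,c} = {x,y,z}" "a \<noteq> b" "a \<noteq> c" "b \<noteq> c" "{v,a} \<in> F" "{v,b} \<in> F" "{v,c} \<notin> F"
    using pick3[of x y z "\<lambda>u. {v,u} \<in> F"] N by blast
  thus ?thesis using N(1) by metis
qed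


lemma outer_equiv:
  assumes L: "L \<subseteq> IE E v"
  shows "(\<exists>!e. e \<in> Cset F f \<union> L \<and> Outer v u i \<in> e) \<longleftrightarrow>
    (if {u,v} \<in> F \<and> i = f {u,v} then \<not> (\<exists>e\<in>L. Outer v u i \<in> e) else (\<exists>!e. e \<in> L \<and> Outer v u i \<in> e))"
proof (cases "{u,v} \<in> F \<and> i = f {u,v}")
  case True
  let ?c = "cross_edge u v i"
  have c1: "?c \<in> Cset F f" using True by (simp add: C_mem)
  have c2: "Outer v u i \<in> ?c" by (simp add: cross_edge_def)
  have "?c \<in> CR E" using True F_sub unfolding CR_def by blast
  hence cL: "?c \<notin> L" using L IE_CR[of ?c E v] by blast
  have uniqC: "e \<in> Cset F f \<Longrightarrow> Outer v u i \<in> e \<Longrightarrow> e = ?c" for e using C_outer[of e F f v u i] by blast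
  have "(\<exists>!e. e \<in> Cset F f \<union> L \<and> Outer v u i \<in> e) \<longleftrightarrow> \<not> (\<exists>e\<in>L. Outer v u i \<in> e)"
  proof
    assume h: "\<exists>!e. e \<in> Cset F f \<union> L \<and> Outer v u i \<in> e"
    then obtain e0 where u0: "\<And>y. y \<in> Cset F f \<union> L \<and> Outer v u i \<in> y \<Longrightarrow> y = e0"
      by (rule ex1E) blast
    have "?c = e0" using u0 c1 c2 by blast
    show "\<not> (\<exists>e\<in>L. Outer v u i \<in> e)"
    proof
      assume "\<exists>e\<in>L. Outer v u i \<in> e"
      then obtain e where e: "e \<in> L" "Outer v u i \<in> e" by blast
      hence "e = e0" using u0 by blast
      thus False using e(1) cL \<open>?c = e0\<close> by simp
    qed
  next
    assume h: "\<not> (\<exists>e\<in>L. Outer v u i \<in> e)"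
    show "\<exists>!e. e \<in> Cset F f \<union> L \<and> Outer v u i \<in> e"
    proof (rule ex1I[of _ ?c])
      show "?c \<in> Cset F f \<union> L \<and> Outer v u i \<in> ?c" using c1 c2 by blast
    next
      fix y assume y: "y \<in> Cset F f \<union> L \<and> Outer v u i \<in> y"
      hence "y \<in> Cset F f" using h by blast
      thus "y = ?c" using uniqC y by blast
    qed
  qed
  thus ?thesis by (simp only: if_P[OF True])
next
  case False
  have "e \<in> Cset F f \<union> L \<and> Outer v u i \<in> e \<longleftrightarrow> e \<in> L \<and> Outer v u i \<in> e" for e
  proof -
    have "\<not> (e \<in> Cset F f \<and> Outer v u i \<in> e)" using C_outer[of e F f v u i] False by blast
    thus ?thesis by blast
  qed
  hence "(\<exists>!e. e \<in> Cset F f \<union> L \<and> Outer v u i \<in> e) \<longleftrightarrow> (\<exists>!e. e \<in> L \<and> Outer v u i \<in> e)" by simp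
  thus ?thesis by (simp only: if_not_P[OF False])
qed

lemma inner_equiv:
  "(\<exists>!e. e \<in> Cset F f \<union> L \<and> Inner v S \<in> e) \<longleftrightarrow> (\<exists>!e. e \<in> L \<and> Inner v S \<in> e)"
proof -
  have "e \<in> Cset F f \<union> L \<and> Inner v S \<in> e \<longleftrightarrow> e \<in> L \<and> Inner v S \<in> e" for e
    using C_inner[of e F f v S] by blast
  thus ?thesis by simp
qed

lemma Loc_good:
  assumes v: "v \<in> U \<union> V" and N: "nbrs E v = {x,y,z}" and d: "x \<noteq> y" "x \<noteq> z" "y \<noteq> z"
  shows "Loc (U \<union> V) E F f v = {L. good x y z v (\<lambda>u i. {u,v} \<in> F \<and> i = f {u,v}) L}"
proof (rule set_eqI)
  fix L
  let ?B = "\<lambda>u i. {u,v} \<in> F \<and> i = f {u,v}"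
  have IEv: "IE E v = IEloc v {x,y,z}" using N by (simp add: IE_def)
  have vv: "(w \<in> hat_verts (U \<union> V) E \<and> owner w = v) \<longleftrightarrow>
     (\<exists>S. w = Inner v S \<and> S \<subseteq> {x,y,z} \<and> even (card S)) \<or> (\<exists>u i. w = Outer v u i \<and> u \<in> {x,y,z})" for w
    using v N by (cases w) (auto simp: hat_verts_def)
  show "L \<in> Loc (U \<union> V) E F f v \<longleftrightarrow> L \<in> {L. good x y z v ?B L}"
  proof (cases "L \<subseteq> IE E v")
    case False
    have "L \<notin> Loc (U \<union> V) E F f v" using False by (simp add: Loc_def)
    moreover have "\<not> good x y z v ?B L" using False by (simp only: good_def[OF d] IEv[symmetric] simp_thms)
    ultimately show ?thesis by simp
  next
    case True
    have "(\<forall>w\<in>hat_verts (U \<union> V) E. owner w = v \<longrightarrow> (\<exists>!e. e \<in> Cset F f \<union> L \<and> w \<in> e)) \<longleftrightarrow>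
      (\<forall>S. S \<subseteq> {x,y,z} \<and> even (card S) \<longrightarrow> (\<exists>!e. e \<in> L \<and> Inner v S \<in> e)) \<and>
      (\<forall>u\<in>{x,y,z}. \<forall>i. if ?B u i then \<not> (\<exists>e\<in>L. Outer v u i \<in> e) else (\<exists>!e. e \<in> L \<and> Outer v u i \<in> e))"
      (is "?l \<longleftrightarrow> ?r1 \<and> ?r2")
    proof
      assume l: ?l
      have "?r1"
      proof (intro allI impI)
        fix S assume "S \<subseteq> {x,y,z} \<and> even (card S)"
        hence "Inner v S \<in> hat_verts (U \<union> V) E" "owner (Inner v S) = v" using vv[of "Inner v S"] by auto
        hence "\<exists>!e. e \<in> Cset F f \<union> L \<and> Inner v S \<in> e" using l by blast
        thus "\<exists>!e. e \<in> L \<and> Inner v S \<in> e" using inner_equiv[of L v S] by simp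
      qed
      moreover have "?r2"
      proof (intro ballI allI)
        fix u i assume "u \<in> {x,y,z}"
        hence "Outer v u i \<in> hat_verts (U \<union> V) E" "owner (Outer v u i) = v" using vv[of "Outer v u i"] by auto
        thus "if ?B u i then \<not> (\<exists>e\<in>L. Outer v u i \<in> e) else (\<exists>!e. e \<in> L \<and> Outer v u i \<in> e)"
        proof -
          have "\<exists>!e. e \<in> Cset F f \<union> L \<and> Outer v u i \<in> e" using l \<open>Outer v u i \<in> hat_verts (U \<union> V) E\<close> \<open>owner (Outer v u i) = v\<close> by blast
          thus ?thesis using outer_equiv[OF True, of u i] by blast
        qed
      qed
      ultimately show "?r1 \<and> ?r2" ..
    next
      assume r: "?r1 \<and> ?r2"
      show ?l
      proof (intro ballI impI)
        fix w assume "w \<in> hat_verts (U \<union> V) E" "owner w = v"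
        hence "(\<exists>S. w = Inner v S \<and> S \<subseteq> {x,y,z} \<and> even (card S)) \<or> (\<exists>u i. w = Outer v u i \<and> u \<in> {x,y,z})"
          using vv by blast
        thus "\<exists>!e. e \<in> Cset F f \<union> L \<and> w \<in> e"
        proof
          assume "\<exists>S. w = Inner v S \<and> S \<subseteq> {x,y,z} \<and> even (card S)"
          then obtain S where S: "w = Inner v S" "S \<subseteq> {x,y,z}" "even (card S)" by blast
          have "\<exists>!e. e \<in> L \<and> Inner v S \<in> e" using r S(2,3) by blast
          thus ?thesis using S(1) inner_equiv[of L v S] by simp
        next
          assume "\<exists>u i. w = Outer v u i \<and> u \<in> {x,y,z}"
          then obtain u i where ui: "w = Outer v u i" "u \<in> {x,y,z}" by blast
          have "if ?B u i then \<not> (\<exists>e\<in>L. Outer v u i \<in> e) else (\<exists>!e. e \<in> L \<and> Outer v u i \<in> e)"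
            using r ui(2) by blast
          hence "\<exists>!e. e \<in> Cset F f \<union> L \<and> Outer v u i \<in> e" using outer_equiv[OF True, of u i] by blast
          thus ?thesis using ui(1) by simp
        qed
      qed
    qed
    moreover have "L \<in> Loc (U \<union> V) E F f v \<longleftrightarrow> ?l" using True by (simp add: Loc_def)
    moreover have "good x y z v ?B L \<longleftrightarrow> ?r1 \<and> ?r2" using True by (simp only: good_def[OF d] IEv[symmetric] simp_thms)
    ultimately show ?thesis by simp
  qed
qed

lemma card_Loc:
  assumes v: "v \<in> U \<union> V"
  shows "card (Loc (U \<union> V) E F f v) = 2"
proof -
  obtain x y z where N: "nbrs E v = {x,y,z}" and d: "x \<noteq> y" "x \<noteq> z" "y \<noteq> z"
    and F: "{v,x} \<in> F" "{v,y} \<in> F" "{v,z} \<notin> F"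
    using local_structure[OF v] by blast
  let ?B = "\<lambda>u i. {u,v} \<in> F \<and> i = f {u,v}"
  have B: "\<And>i. ?B x i = (i = f {x,v})" "\<And>i. ?B y i = (i = f {y,v})" "\<And>i. \<not> ?B z i"
    using F by (auto simp: insert_commute)
  show ?thesis
    unfolding Loc_good[OF v N d] by (rule card_good[OF d B])
qed


lemma C_CR: "Cset F f \<subseteq> CR E"
proof
  fix e assume "e \<in> Cset F f"
  then obtain u v where "e = cross_edge u v (f {u,v})" "{u,v} \<in> F" unfolding Cset_def by blast
  moreover have "{u,v} \<in> E" using calculation(2) F_sub by blast
  ultimately show "e \<in> CR E" unfolding CR_def by blast
qed

lemma M_CR:
  assumes M: "M \<in> mu_set (U \<union> V) E F f"
  shows "M \<inter> CR E = Cset F f"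
proof
  have pm: "M \<subseteq> hat_edges (U \<union> V) E" and un: "uniform E M" and Fo: "F_of E M = F"
    and fc: "\<forall>u v. {u, v} \<in> F \<longrightarrow> cross_edge u v (f {u, v}) \<in> M"
  proof -
    have "perfect_matching (hat_verts (U \<union> V) E) (hat_edges (U \<union> V) E) M \<and> uniform E M \<and>
      F_of E M = F \<and> (\<forall>u v. {u, v} \<in> F \<longrightarrow> cross_edge u v (f {u, v}) \<in> M)"
      using M unfolding mu_set_def by (rule CollectD)
    thus "M \<subseteq> hat_edges (U \<union> V) E" "uniform E M" "F_of E M = F"
      "\<forall>u v. {u, v} \<in> F \<longrightarrow> cross_edge u v (f {u, v}) \<in> M"
      unfolding perfect_matching_def by blast+
  qed
  show "M \<inter> CR E \<subseteq> Cset F f"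
  proof
    fix e assume e: "e \<in> M \<inter> CR E"
    then obtain u v i where eq: "e = cross_edge u v i" and E: "{u,v} \<in> E" by (auto simp: CR_def)
    have nb: "\<not> (cross_edge u v False \<in> M \<and> cross_edge u v True \<in> M)" using un E by (simp add: uniform_def)
    show "e \<in> Cset F f"
    proof (cases "{u,v} \<in> F")
      case True
      hence "cross_edge u v (f {u,v}) \<in> M" using fc by blast
      hence "i = f {u,v}" using nb e eq by (cases i; cases "f {u,v}") auto
      thus ?thesis using True eq by (simp add: C_mem)
    next
      case False
      hence "{u,v} \<notin> F_of E M" using Fo by simp
      hence "\<not> (\<exists>u' v'. {u,v} = {u', v'} \<and> ((cross_edge u' v' False \<in> M) \<noteq> (cross_edge u' v' True \<in> M)))"
        using E unfolding F_of_def by blast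
      hence "(cross_edge u v False \<in> M) = (cross_edge u v True \<in> M)" by blast
      hence False using nb e eq by (cases i) auto
      thus ?thesis ..
    qed
  qed
  show "Cset F f \<subseteq> M \<inter> CR E" using fc C_CR by (auto simp: Cset_def)
qed

lemma M_dec:
  assumes M: "M \<in> mu_set (U \<union> V) E F f"
  shows "M = Cset F f \<union> (\<Union>v\<in>U \<union> V. M \<inter> IE E v)"
proof -
  have sub: "M \<subseteq> (\<Union>v\<in>U \<union> V. IE E v) \<union> CR E"
    using M unfolding hat_edges_eq[symmetric] by (simp add: mu_set_def perfect_matching_def)
  have "M = (M \<inter> CR E) \<union> (\<Union>v\<in>U \<union> V. M \<inter> IE E v)"
  proof (rule set_eqI, rule iffI)
    fix e assume e: "e \<in> M"
    hence "e \<in> (\<Union>v\<in>U \<union> V. IE E v) \<or> e \<in> CR E" using sub by blast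
    thus "e \<in> (M \<inter> CR E) \<union> (\<Union>v\<in>U \<union> V. M \<inter> IE E v)" using e by blast
  qed blast
  thus ?thesis using M_CR[OF M] by simp
qed

lemma cover:
  assumes M: "M = Cset F f \<union> (\<Union>v'\<in>U \<union> V. L v')" and sub: "\<forall>v'\<in>U \<union> V. L v' \<subseteq> IE E v'"
    and v: "v \<in> U \<union> V" and w: "owner w = v"
  shows "(e \<in> M \<and> w \<in> e) \<longleftrightarrow> (e \<in> Cset F f \<union> L v \<and> w \<in> e)"
proof
  assume h: "e \<in> M \<and> w \<in> e"
  show "e \<in> Cset F f \<union> L v \<and> w \<in> e"
  proof (cases "e \<in> Cset F f")
    case False
    then obtain v' where v': "v' \<in> U \<union> V" "e \<in> L v'" using h M by blast
    hence "e \<in> IE E v'" using sub by blast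
    hence "owner w = v'" using h IE_owner[of e E v' w] by blast
    thus ?thesis using v' w h by simp
  qed (use h in simp)
next
  assume h: "e \<in> Cset F f \<union> L v \<and> w \<in> e"
  thus "e \<in> M \<and> w \<in> e" using M v by blast
qed

lemma hv_owner: "w \<in> hat_verts W' E \<Longrightarrow> owner w \<in> W'"
  by (auto simp: hat_verts_def)

definition Phi where "Phi M = restrict (\<lambda>v. M \<inter> IE E v) (U \<union> V)"
definition Psi where "Psi L = Cset F f \<union> (\<Union>v\<in>U \<union> V. L v)"

lemma Phi_in:
  assumes M: "M \<in> mu_set (U \<union> V) E F f"
  shows "Phi M \<in> (\<Pi>\<^sub>E v\<in>U \<union> V. Loc (U \<union> V) E F f v)"
proof -
  have pm: "\<forall>w\<in>hat_verts (U \<union> V) E. \<exists>!e. e \<in> M \<and> w \<in> e"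
    using M by (simp add: mu_set_def perfect_matching_def)
  have "M \<inter> IE E v \<in> Loc (U \<union> V) E F f v" if v: "v \<in> U \<union> V" for v
    unfolding Loc_def
  proof (intro CollectI conjI ballI impI)
    show "M \<inter> IE E v \<subseteq> IE E v" by blast
    fix w assume w: "w \<in> hat_verts (U \<union> V) E" "owner w = v"
    have "(e \<in> M \<and> w \<in> e) \<longleftrightarrow> (e \<in> Cset F f \<union> (M \<inter> IE E v) \<and> w \<in> e)" for e
      using cover[OF M_dec[OF M] _ v w(2), of e] by simp
    moreover have "\<exists>!e. e \<in> M \<and> w \<in> e" using pm w(1) by blast
    ultimately show "\<exists>!e. e \<in> Cset F f \<union> M \<inter> IE E v \<and> w \<in> e" by (simp only:)
  qed
  thus ?thesis by (simp add: Phi_def)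
qed

lemma Psi_in:
  assumes L: "L \<in> (\<Pi>\<^sub>E v\<in>U \<union> V. Loc (U \<union> V) E F f v)"
  shows "Psi L \<in> mu_set (U \<union> V) E F f"
proof -
  have Lsub: "\<forall>v\<in>U \<union> V. L v \<subseteq> IE E v" using L unfolding PiE_iff Loc_def by blast
  have CR: "Psi L \<inter> CR E = Cset F f"
  proof (rule set_eqI, rule iffI)
    fix e assume e: "e \<in> Psi L \<inter> CR E"
    show "e \<in> Cset F f"
    proof (rule ccontr)
      assume "e \<notin> Cset F f"
      then obtain v where v: "v \<in> U \<union> V" "e \<in> L v" using e unfolding Psi_def by blast
      hence "e \<in> IE E v" using Lsub by blast
      thus False using IE_CR[of e E v] e by blast
    qed
  next
    fix e assume "e \<in> Cset F f"
    thus "e \<in> Psi L \<inter> CR E" using C_CR unfolding Psi_def by blast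
  qed
  have pm: "perfect_matching (hat_verts (U \<union> V) E) (hat_edges (U \<union> V) E) (Psi L)"
    unfolding perfect_matching_def
  proof (intro conjI ballI)
    show "Psi L \<subseteq> hat_edges (U \<union> V) E" unfolding hat_edges_eq Psi_def using C_CR Lsub by blast
    fix w assume w: "w \<in> hat_verts (U \<union> V) E"
    have ow: "owner w \<in> U \<union> V" using hv_owner[OF w] .
    have "(e \<in> Psi L \<and> w \<in> e) \<longleftrightarrow> (e \<in> Cset F f \<union> L (owner w) \<and> w \<in> e)" for e
      using cover[OF Psi_def[of L] Lsub ow refl] .
    moreover have "L (owner w) \<in> Loc (U \<union> V) E F f (owner w)" using L ow unfolding PiE_iff by blast
    hence "\<exists>!e. e \<in> Cset F f \<union> L (owner w) \<and> w \<in> e"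
      using w unfolding Loc_def by blast
    ultimately show "\<exists>!e. e \<in> Psi L \<and> w \<in> e" by (simp only:)
  qed
  have cr: "cross_edge u v i \<in> Psi L \<longleftrightarrow> cross_edge u v i \<in> Cset F f" if "{u,v} \<in> E" for u v i
  proof -
    have "cross_edge u v i \<in> CR E" using that by (auto simp: CR_def)
    thus ?thesis using CR by blast
  qed
  have un: "uniform E (Psi L)"
    unfolding uniform_def using cr by (auto simp: C_mem)
  have Fo: "F_of E (Psi L) = F"
  proof
    show "F_of E (Psi L) \<subseteq> F"
    proof
      fix e assume "e \<in> F_of E (Psi L)"
      then obtain u v where "e \<in> E" "e = {u,v}" "(cross_edge u v False \<in> Psi L) \<noteq> (cross_edge u v True \<in> Psi L)"
        by (auto simp: F_of_def)
      thus "e \<in> F" using cr by (auto simp: C_mem)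
    qed
    show "F \<subseteq> F_of E (Psi L)"
    proof
      fix e assume e: "e \<in> F"
      hence eE: "e \<in> E" using F_sub by blast
      then obtain u v where uv: "e = {u,v}" using E_form by blast
      have "(cross_edge u v False \<in> Psi L) \<noteq> (cross_edge u v True \<in> Psi L)"
        using cr[of u v] eE e uv by (auto simp: C_mem)
      thus "e \<in> F_of E (Psi L)" using eE uv by (auto simp: F_of_def)
    qed
  qed
  have fc: "\<forall>u v. {u, v} \<in> F \<longrightarrow> cross_edge u v (f {u, v}) \<in> Psi L"
    unfolding Psi_def by (auto simp: C_mem)
  show ?thesis using pm un Fo fc by (simp add: mu_set_def)
qed

lemma Psi_Phi: "M \<in> mu_set (U \<union> V) E F f \<Longrightarrow> Psi (Phi M) = M"
  using M_dec[of M] by (simp add: Psi_def Phi_def)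

lemma Phi_Psi:
  assumes L: "L \<in> (\<Pi>\<^sub>E v\<in>U \<union> V. Loc (U \<union> V) E F f v)"
  shows "Phi (Psi L) = L"
proof
  fix v
  have Lsub: "\<forall>v\<in>U \<union> V. L v \<subseteq> IE E v" using L unfolding PiE_iff Loc_def by blast
  show "Phi (Psi L) v = L v"
  proof (cases "v \<in> U \<union> V")
    case True
    have "Psi L \<inter> IE E v = L v"
    proof (rule set_eqI, rule iffI)
      fix e assume e: "e \<in> Psi L \<inter> IE E v"
      hence "e \<notin> CR E" using IE_CR[of e E v] by blast
      hence "e \<notin> Cset F f" using C_CR by blast
      then obtain v' where v': "v' \<in> U \<union> V" "e \<in> L v'" using e unfolding Psi_def by blast
      hence "e \<in> IE E v'" using Lsub by blast
      hence "v' = v" using IE_disj[of e E v' v] e by blast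
      thus "e \<in> L v" using v' by simp
    next
      fix e assume "e \<in> L v"
      thus "e \<in> Psi L \<inter> IE E v" using True Lsub unfolding Psi_def by blast
    qed
    thus ?thesis using True by (simp add: Phi_def)
  next
    case False
    thus ?thesis using L by (simp add: Phi_def PiE_def extensional_def)
  qed
qed

lemma card_mu: "card (mu_set (U \<union> V) E F f) = 2 ^ card (U \<union> V)"
proof -
  have "bij_betw Phi (mu_set (U \<union> V) E F f) (\<Pi>\<^sub>E v\<in>U \<union> V. Loc (U \<union> V) E F f v)"
  proof (rule bij_betw_byWitness[where f'=Psi])
    show "\<forall>a\<in>mu_set (U \<union> V) E F f. Psi (Phi a) = a" using Psi_Phi by blast
    show "\<forall>a'\<in>\<Pi>\<^sub>E v\<in>U \<union> V. Loc (U \<union> V) E F f v. Phi (Psi a') = a'" using Phi_Psi by blast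
    show "Phi ` mu_set (U \<union> V) E F f \<subseteq> (\<Pi>\<^sub>E v\<in>U \<union> V. Loc (U \<union> V) E F f v)" using Phi_in by blast
    show "Psi ` (\<Pi>\<^sub>E v\<in>U \<union> V. Loc (U \<union> V) E F f v) \<subseteq> mu_set (U \<union> V) E F f" using Psi_in by blast
  qed
  hence "card (mu_set (U \<union> V) E F f) = card (\<Pi>\<^sub>E v\<in>U \<union> V. Loc (U \<union> V) E F f v)"
    by (rule bij_betw_same_card)
  also have "\<dots> = (\<Prod>v\<in>U \<union> V. card (Loc (U \<union> V) E F f v))"
    by (rule card_PiE[OF finW])
  also have "\<dots> = (\<Prod>v\<in>U \<union> V. 2)"
    by (rule prod.cong) (auto simp: card_Loc)
  finally show ?thesis by simp
qed

end

theorem mainTheorem3: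
  fixes U V :: "'a set" and E F :: "'a set set" and f :: "'a set \<Rightarrow> bool" and m :: nat
  assumes "cubic_bipartite U V E"
    and "card U = m" and "card V = m"
    and "two_factor (U \<union> V) E F"
  shows "card (mu_set (U \<union> V) E F f) = 2 ^ (2 * m)"
proof -
  have "card (U \<union> V) = 2 * m"
    using assms(1-3) card_Un_disjoint[of U V] by (simp add: cubic_bipartite_def)
  thus ?thesis using card_mu[OF assms(1,4), of f] by simp
qed

end
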